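(* Let $\mathcal{C}$ be a binary linear code with minimum distance $d(\mathcal{C}) \le 3$. Then every parity-check matrix $H$ for $\mathcal{C}$ satisfies $s(H) = d(\mathcal{C})$, and therefore $\rho(\mathcal{C}) = r(\mathcal{C})$.
   Context: A parity-check matrix for a linear code $\mathcal{C}$ is any matrix (possibly with linearly dependent rows) whose rows span the dual code $\mathcal{C}^\perp$. $d(\mathcal{C})$ is the minimum Hamming distance. For a parity-check matrix $H$, the stopping distance $s(H)$ is the largest integer such that for every set of $s(H)-1$ or fewer columns of $H$, the projection of $H$ onto those columns contains at least one row of Hamming weight exactly one. The redundancy $r(\mathcal{C})$ is the minimum number of rows of a parity-check matrix for $\mathcal{C}$ (i.e. $n-\dim\mathcal{C}$). The stopping redundancy $\rho(\mathcal{C})$ is the smallest number of rows of a parity-check matrix $H$ for $\mathcal{C}$ with $s(H) = d(\mathcal{C})$. *)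

theory Defs
  imports Main
begin

text \<open>Binary vectors of length n are modelled as functions from a finite index
type 'n (the coordinate/column set, n = CARD('n)) to bool; True means 1 in GF(2).\<close>

type_synonym 'n bvec = "'n \<Rightarrow> bool"

definition bzero :: "'n bvec" where
  "bzero = (\<lambda>i. False)"

definition badd :: "'n bvec \<Rightarrow> 'n bvec \<Rightarrow> 'n bvec" where
  "badd x y = (\<lambda>i. x i \<noteq> y i)"

definition weight :: "('n::finite) bvec \<Rightarrow> nat" where
  "weight x = card {i. x i}"

definition bsum :: "'n bvec set \<Rightarrow> 'n bvec" where
  "bsum T = (\<lambda>i. odd (card {v \<in> T. v i}))"

definition row_span :: "'n bvec list \<Rightarrow> 'n bvec set" where
  "row_span H = {bsum T | T. T \<subseteq> set H}"

definition binary_linear_code :: "('n::finite) bvec set \<Rightarrow> bool" where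
  "binary_linear_code C \<longleftrightarrow> bzero \<in> C \<and> (\<forall>x\<in>C. \<forall>y\<in>C. badd x y \<in> C)"

definition dual_code :: "('n::finite) bvec set \<Rightarrow> 'n bvec set" where
  "dual_code C = {y. \<forall>x\<in>C. even (card {i. x i \<and> y i})}"

text \<open>Minimum Hamming distance = minimum weight of a nonzero codeword.\<close>
definition min_dist :: "('n::finite) bvec set \<Rightarrow> nat" where
  "min_dist C = Min {weight x | x. x \<in> C \<and> x \<noteq> bzero}"

text \<open>H (list of rows, possibly dependent) is a parity-check matrix for C.\<close>
definition parity_check_matrix :: "('n::finite) bvec set \<Rightarrow> 'n bvec list \<Rightarrow> bool" where
  "parity_check_matrix C H \<longleftrightarrow> row_span H = dual_code C"

definition stopping_distance :: "('n::finite) bvec list \<Rightarrow> nat" where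
  "stopping_distance H = (GREATEST s. \<forall>S::'n set. S \<noteq> {} \<and> card S + 1 \<le> s \<longrightarrow>
      (\<exists>h \<in> set H. card {i \<in> S. h i} = 1))"

definition redundancy :: "('n::finite) bvec set \<Rightarrow> nat" where
  "redundancy C = (LEAST m. \<exists>H. parity_check_matrix C H \<and> length H = m)"

definition stopping_redundancy :: "('n::finite) bvec set \<Rightarrow> nat" where
  "stopping_redundancy C = (LEAST m. \<exists>H. parity_check_matrix C H \<and> length H = m
      \<and> stopping_distance H = min_dist C)"

end

theory Submission
  imports Defs
begin

definition ip :: "('n::finite) bvec \<Rightarrow> 'n bvec \<Rightarrow> bool" where
  "ip x y = odd (card {i. x i \<and> y i})"

lemma odd_card_symdiff:
  assumes "finite A" "finite B"
  shows "odd (card ((A - B) \<union> (B - A))) = (odd (card A) \<noteq> odd (card B))"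
proof -
  have 1: "card A = card (A - B) + card (A \<inter> B)"
    using card_Int_Diff[OF assms(1), of B] by simp
  have 2: "card B = card (B - A) + card (A \<inter> B)"
    using card_Int_Diff[OF assms(2), of A] by (simp add: Int_commute)
  have 3: "card ((A - B) \<union> (B - A)) = card (A - B) + card (B - A)"
    using assms by (intro card_Un_disjoint) auto
  show ?thesis unfolding 1 2 3 by auto
qed

lemma ip_add_left: "ip (badd x z) y = (ip x y \<noteq> ip (z::('n::finite) bvec) y)"
proof -
  let ?X = "{i. x i \<and> y i}" and ?Z = "{i. z i \<and> y i}"
  have "{i. badd x z i \<and> y i} = (?X - ?Z) \<union> (?Z - ?X)"
    unfolding badd_def by auto
  then show ?thesis unfolding ip_def using odd_card_symdiff[of ?X ?Z] by simp
qed

lemma ip_sym: "ip x y = ip y x"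
  unfolding ip_def by (simp add: conj_commute)

lemma ip_add_right: "ip y (badd x z) = (ip y x \<noteq> ip y (z::('n::finite) bvec))"
  by (simp add: ip_sym[of y] ip_add_left)

lemma ip_unit: "ip (\<lambda>k. k = a) (c::('n::finite) bvec) = c a"
proof -
  have "{i. i = a \<and> c i} = (if c a then {a} else {})" by auto
  then show ?thesis unfolding ip_def by simp
qed

lemma sep_aux:
  fixes F :: "('n::finite) set"
  assumes "finite F"
  shows "\<forall>C v. binary_linear_code C \<and> (\<forall>c\<in>C. \<forall>i. c i \<longrightarrow> i \<in> F) \<and> (\<forall>i. v i \<longrightarrow> i \<in> F)
     \<and> v \<notin> C \<longrightarrow> (\<exists>y. (\<forall>c\<in>C. \<not> ip y c) \<and> ip y v)"
  using assms
proof (induct F rule: finite_induct)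
  case empty
  show ?case
  proof (intro allI impI)
    fix C and v :: "'n bvec"
    assume h: "binary_linear_code C \<and> (\<forall>c\<in>C. \<forall>i. c i \<longrightarrow> i \<in> {}) \<and> (\<forall>i. v i \<longrightarrow> i \<in> {}) \<and> v \<notin> C"
    then have "v = bzero" unfolding bzero_def by auto
    with h show "\<exists>y. (\<forall>c\<in>C. \<not> ip y c) \<and> ip y v" unfolding binary_linear_code_def by auto
  qed
next
  case (insert a F)
  show ?case
  proof (intro allI impI)
    fix C and v :: "'n bvec"
    assume h: "binary_linear_code C \<and> (\<forall>c\<in>C. \<forall>i. c i \<longrightarrow> i \<in> insert a F) \<and> (\<forall>i. v i \<longrightarrow> i \<in> insert a F) \<and> v \<notin> C"
    have lin: "binary_linear_code C" and suppC: "\<forall>c\<in>C. \<forall>i. c i \<longrightarrow> i \<in> insert a F"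
      and suppv: "\<forall>i. v i \<longrightarrow> i \<in> insert a F" and vC: "v \<notin> C" using h by auto
    have z: "bzero \<in> C" and cl: "\<And>x y. x \<in> C \<Longrightarrow> y \<in> C \<Longrightarrow> badd x y \<in> C"
      using lin unfolding binary_linear_code_def by auto
    show "\<exists>y. (\<forall>c\<in>C. \<not> ip y c) \<and> ip y v"
    proof (cases "\<exists>p\<in>C. p a")
      case False
      show ?thesis
      proof (cases "v a")
        case True
        then show ?thesis using False by (intro exI[of _ "\<lambda>k. k = a"]) (auto simp: ip_unit)
      next
        case va: False
        have "(\<forall>c\<in>C. \<forall>i. c i \<longrightarrow> i \<in> F)" using suppC False by blast
        moreover have "\<forall>i. v i \<longrightarrow> i \<in> F" using suppv va by blast
        ultimately show ?thesis using insert.hyps(3) lin vC by blast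
      qed
    next
      case True
      then obtain p where pC: "p \<in> C" and pa: "p a" by blast
      define \<pi> where "\<pi> = (\<lambda>c::'n bvec. \<lambda>k. c k \<noteq> (c a \<and> p k))"
      have \<pi>a: "\<And>c. \<pi> c a = False" unfolding \<pi>_def using pa by auto
      have \<pi>C: "\<And>c. c \<in> C \<Longrightarrow> \<pi> c \<in> C"
      proof -
        fix c assume "c \<in> C"
        show "\<pi> c \<in> C"
        proof (cases "c a")
          case True
          then have "\<pi> c = badd c p" unfolding \<pi>_def badd_def by auto
          then show ?thesis using cl \<open>c \<in> C\<close> pC by simp
        next
          case False
          then have "\<pi> c = c" unfolding \<pi>_def by auto
          then show ?thesis using \<open>c \<in> C\<close> by simp
        qed
      qed
      have decomp: "\<And>c. c = (if c a then badd (\<pi> c) p else \<pi> c)"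
        unfolding \<pi>_def badd_def by auto
      define C' where "C' = \<pi> ` C"
      have lin': "binary_linear_code C'"
        unfolding binary_linear_code_def
      proof (intro conjI ballI)
        have "\<pi> bzero = bzero" unfolding \<pi>_def bzero_def by auto
        then show "bzero \<in> C'" unfolding C'_def using z by force
      next
        fix x y assume "x \<in> C'" "y \<in> C'"
        then obtain x0 y0 where x0: "x0 \<in> C" "x = \<pi> x0" and y0: "y0 \<in> C" "y = \<pi> y0"
          unfolding C'_def by auto
        have "badd x y = \<pi> (badd x0 y0)" unfolding x0 y0 \<pi>_def badd_def by auto
        then show "badd x y \<in> C'" unfolding C'_def using cl x0 y0 by auto
      qed
      have supp': "\<forall>c\<in>C'. \<forall>i. c i \<longrightarrow> i \<in> F"
      proof (intro ballI allI impI)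
        fix c i assume "c \<in> C'" "c i"
        then obtain c0 where c0: "c0 \<in> C" "c = \<pi> c0" unfolding C'_def by auto
        have "i \<noteq> a" using \<pi>a \<open>c i\<close> c0 by auto
        moreover have "c0 i \<or> p i" using \<open>c i\<close> c0 unfolding \<pi>_def by auto
        ultimately show "i \<in> F" using suppC c0 pC by blast
      qed
      have suppv': "\<forall>i. \<pi> v i \<longrightarrow> i \<in> F"
      proof (intro allI impI)
        fix i assume "\<pi> v i"
        have "i \<noteq> a" using \<pi>a \<open>\<pi> v i\<close> by metis
        moreover have "v i \<or> p i" using \<open>\<pi> v i\<close> unfolding \<pi>_def by auto
        ultimately show "i \<in> F" using suppv suppC pC by blast
      qed
      have vC': "\<pi> v \<notin> C'"
      proof
        assume "\<pi> v \<in> C'"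
        then obtain c where c: "c \<in> C" "\<pi> v = \<pi> c" unfolding C'_def by auto
        have "v \<in> C"
        proof (cases "v a")
          case True
          then have "v = badd (\<pi> c) p" using decomp[of v] c by simp
          then show ?thesis using cl \<pi>C c pC by simp
        next
          case False
          then have "v = \<pi> c" using decomp[of v] c by simp
          then show ?thesis using \<pi>C c by simp
        qed
        with vC show False by simp
      qed
      obtain y' where y'1: "\<forall>c\<in>C'. \<not> ip y' c" and y'2: "ip y' (\<pi> v)"
        using insert.hyps(3) lin' supp' suppv' vC' by blast
      define y where "y = (if ip y' p then badd y' (\<lambda>k. k = a) else y')"
      have yp: "\<not> ip y p" unfolding y_def using pa by (auto simp: ip_add_left ip_unit)
      have y\<pi>: "\<And>c. ip y (\<pi> c) = ip y' (\<pi> c)"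
        unfolding y_def using \<pi>a by (auto simp: ip_add_left ip_unit)
      have gen: "\<And>c. ip y c = ip y' (\<pi> c)"
      proof -
        fix c
        show "ip y c = ip y' (\<pi> c)"
        proof (cases "c a")
          case True
          have "ip y c = ip y (badd (\<pi> c) p)" using decomp[of c] True by simp
          also have "\<dots> = ip y' (\<pi> c)" using yp y\<pi> by (simp add: ip_add_right)
          finally show ?thesis .
        next
          case False
          have "ip y c = ip y (\<pi> c)" using decomp[of c] False by simp
          then show ?thesis using y\<pi> by simp
        qed
      qed
      show ?thesis
        using y'1 y'2 gen unfolding C'_def by (intro exI[of _ y]) auto
    qed
  qed
qed

lemma double_dual:
  fixes C :: "('n::finite) bvec set"
  assumes "binary_linear_code C" and "\<forall>y\<in>dual_code C. \<not> ip y v"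
  shows "v \<in> C"
proof (rule ccontr)
  assume "v \<notin> C"
  then obtain y where y1: "\<forall>c\<in>C. \<not> ip y c" and y2: "ip y v"
    using sep_aux[of UNIV, OF finite, simplified, rule_format, OF conjI[OF assms(1) \<open>v \<notin> C\<close>]] by blast
  have "y \<in> dual_code C" using y1 unfolding dual_code_def ip_def by (simp add: conj_commute)
  with assms(2) y2 show False by blast
qed

lemma bsum_single: "bsum {h} = h"
  unfolding bsum_def by (rule ext) (simp add: Collect_conv_if)

lemma rows_dual:
  assumes "parity_check_matrix C H" "h \<in> set H"
  shows "h \<in> dual_code C"
proof -
  have "bsum {h} \<in> row_span H" unfolding row_span_def using assms(2) by blast
  then show ?thesis using assms(1) unfolding parity_check_matrix_def bsum_single by simp
qed

lemma span_zero:
  assumes "\<forall>h\<in>set H. \<not> h i" "y \<in> row_span H"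
  shows "\<not> y i"
proof -
  obtain T where T: "T \<subseteq> set H" "y = bsum T" using assms(2) unfolding row_span_def by auto
  have e: "{v \<in> T. v i} = {}" using T(1) assms(1) by auto
  show ?thesis unfolding T(2) bsum_def e by simp
qed

lemma span_eq:
  assumes "\<forall>h\<in>set H. h i = h j" "y \<in> row_span H"
  shows "y i = y j"
proof -
  obtain T where T: "T \<subseteq> set H" "y = bsum T" using assms(2) unfolding row_span_def by auto
  have e: "{v \<in> T. v i} = {v \<in> T. v j}" using T(1) assms(1) by auto
  show ?thesis unfolding T(2) bsum_def e by simp
qed

lemma weight_unit: "weight (\<lambda>k::'n::finite. k = i) = 1"
  unfolding weight_def by simp

lemma weight_two: "i \<noteq> j \<Longrightarrow> weight (badd (\<lambda>k::'n::finite. k = i) (\<lambda>k. k = j)) = 2"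
proof -
  assume "i \<noteq> j"
  have "{k. badd (\<lambda>k. k = i) (\<lambda>k. k = j) k} = {i, j}" unfolding badd_def using \<open>i \<noteq> j\<close> by auto
  then show ?thesis unfolding weight_def using \<open>i \<noteq> j\<close> by simp
qed

lemma sd_main:
  fixes C :: "('n::finite) bvec set"
  assumes lin: "binary_linear_code C"
    and ne: "C \<noteq> {bzero}"
    and d3: "min_dist C \<le> 3"
    and pcm: "parity_check_matrix C H"
  shows "stopping_distance H = min_dist C"
proof -
  define W where "W = {weight x | x. x \<in> C \<and> x \<noteq> bzero}"
  have z: "bzero \<in> C" using lin unfolding binary_linear_code_def by auto
  have Wne: "W \<noteq> {}" unfolding W_def using ne z by auto
  have Wfin: "finite W" unfolding W_def by simp
  have md: "min_dist C = Min W" unfolding min_dist_def W_def by simp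
  have mle: "\<And>x. x \<in> C \<Longrightarrow> x \<noteq> bzero \<Longrightarrow> min_dist C \<le> weight x"
    unfolding md W_def using Wfin W_def by (intro Min_le) auto
  obtain x0 where x0: "x0 \<in> C" "x0 \<noteq> bzero" "weight x0 = min_dist C"
    using Min_in[OF Wfin Wne] unfolding md W_def by auto
  have dual_span: "dual_code C = row_span H" using pcm unfolding parity_check_matrix_def by simp
  define P where "P = (\<lambda>s. \<forall>S::'n set. S \<noteq> {} \<and> card S + 1 \<le> s \<longrightarrow>
      (\<exists>h \<in> set H. card {i \<in> S. h i} = 1))"
  have Pd: "P (min_dist C)"
    unfolding P_def
  proof (intro allI impI)
    fix S :: "'n set" assume S: "S \<noteq> {} \<and> card S + 1 \<le> min_dist C"
    have "card S \<noteq> 0" using S by simp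
    then have "card S = 1 \<or> card S = 2" using S d3 by linarith
    then show "\<exists>h \<in> set H. card {i \<in> S. h i} = 1"
    proof
      assume "card S = 1"
      then obtain i where Si: "S = {i}" using card_1_singletonE by blast
      show ?thesis
      proof (rule ccontr)
        assume "\<not> ?thesis"
        then have "\<forall>h\<in>set H. \<not> h i" using Si by (auto simp: Collect_conv_if split: if_splits)
        then have "\<forall>y\<in>dual_code C. \<not> ip y (\<lambda>k. k = i)"
        proof (intro ballI)
          fix y assume hz: "\<forall>h\<in>set H. \<not> h i" and "y \<in> dual_code C"
          then have "\<not> y i" using span_zero[OF hz] dual_span by simp
          then show "\<not> ip y (\<lambda>k. k = i)" by (simp add: ip_sym[of y] ip_unit)
        qed
        then have iC: "(\<lambda>k. k = i) \<in> C" using double_dual[OF lin] by simp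
        have "(\<lambda>k. k = i) \<noteq> bzero" unfolding bzero_def by (simp add: fun_eq_iff)
        then have "min_dist C \<le> weight (\<lambda>k. k = i)" using mle[OF iC] by simp
        then have "min_dist C \<le> 1" by (simp add: weight_unit)
        then show False using S Si by simp
      qed
    next
      assume "card S = 2"
      then obtain i j where Sij: "S = {i, j}" "i \<noteq> j" by (meson card_2_iff)
      show ?thesis
      proof (rule ccontr)
        assume "\<not> ?thesis"
        then have "\<forall>h\<in>set H. h i = h j"
        proof (intro ballI)
          fix h assume h: "h \<in> set H" and nn: "\<not> (\<exists>h \<in> set H. card {k \<in> S. h k} = 1)"
          show "h i = h j"
          proof (rule ccontr)
            assume "h i \<noteq> h j"
            then have "{k \<in> S. h k} = {i} \<or> {k \<in> S. h k} = {j}" using Sij by auto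
            then show False using nn h by auto
          qed
        qed
        then have "\<forall>y\<in>dual_code C. \<not> ip y (badd (\<lambda>k. k = i) (\<lambda>k. k = j))"
        proof (intro ballI)
          fix y assume hz: "\<forall>h\<in>set H. h i = h j" and "y \<in> dual_code C"
          then have "y i = y j" using span_eq[OF hz] dual_span by simp
          then show "\<not> ip y (badd (\<lambda>k. k = i) (\<lambda>k. k = j))"
            by (simp add: ip_add_right ip_sym[of y] ip_unit)
        qed
        then have iC: "badd (\<lambda>k. k = i) (\<lambda>k. k = j) \<in> C" using double_dual[OF lin] by simp
        have "badd (\<lambda>k. k = i) (\<lambda>k. k = j) \<noteq> bzero"
        proof
          assume "badd (\<lambda>k. k = i) (\<lambda>k. k = j) = bzero"
          then have "badd (\<lambda>k. k = i) (\<lambda>k. k = j) i = bzero i" by simp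
          then show False unfolding bzero_def badd_def using Sij(2) by simp
        qed
        then have "min_dist C \<le> weight (badd (\<lambda>k. k = i) (\<lambda>k. k = j))" using mle[OF iC] by simp
        then have "min_dist C \<le> 2" by (simp add: weight_two[OF Sij(2)])
        then show False using S Sij by simp
      qed
    qed
  qed
  have Pub: "\<And>s. P s \<Longrightarrow> s \<le> min_dist C"
  proof (rule ccontr)
    fix s assume Ps: "P s" and "\<not> s \<le> min_dist C"
    define S where "S = {i. x0 i}"
    have "S \<noteq> {}" using x0(2) unfolding S_def bzero_def by auto
    moreover have "card S + 1 \<le> s" using x0(3) \<open>\<not> s \<le> min_dist C\<close> unfolding S_def weight_def by simp
    ultimately obtain h where h: "h \<in> set H" "card {i \<in> S. h i} = 1" using Ps unfolding P_def by blast
    have "h \<in> dual_code C" using rows_dual[OF pcm h(1)] .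
    then have "even (card {i. x0 i \<and> h i})" using x0(1) unfolding dual_code_def by auto
    moreover have "{i. x0 i \<and> h i} = {i \<in> S. h i}" unfolding S_def by auto
    ultimately show False using h(2) by simp
  qed
  have "stopping_distance H = (GREATEST s. P s)" unfolding stopping_distance_def P_def by simp
  also have "\<dots> = min_dist C" using Pd Pub by (rule Greatest_equality)
  finally show ?thesis .
qed

theorem theorem3:
  fixes C :: "('n::finite) bvec set"
  assumes "binary_linear_code C"
    and "C \<noteq> {bzero}"
    and "min_dist C \<le> 3"
  shows "(\<forall>H. parity_check_matrix C H \<longrightarrow> stopping_distance H = min_dist C)
         \<and> stopping_redundancy C = redundancy C"
proof
  show A: "\<forall>H. parity_check_matrix C H \<longrightarrow> stopping_distance H = min_dist C"
    using sd_main assms by blast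
  have "\<And>m. (\<exists>H. parity_check_matrix C H \<and> length H = m \<and> stopping_distance H = min_dist C)
     = (\<exists>H. parity_check_matrix C H \<and> length H = m)" using A by blast
  then show "stopping_redundancy C = redundancy C"
    unfolding stopping_redundancy_def redundancy_def by simp
qed

end
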